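(* Let $(S,\mathcal{A},\mu)$ be a complete, $\sigma$-finite measure space. If $X$ is a generalised lush (GL) real Banach space, then $L^1(\mu,X)$ is also GL.
   Context: For a real Banach space $X$, $y^*\in S_{X^*}$ and $\varepsilon>0$, $S(y^*,\varepsilon)=\{z\in B_X:y^*(z)>1-\varepsilon\}$, and $d(x,A)=\inf_{a\in A}\|x-a\|$. $X$ is generalised lush (GL) if for every $x\in S_X$ and every $\varepsilon>0$ there is $y^*\in S_{X^*}$ with $x\in S(y^*,\varepsilon)$ and $d(z,S(y^*,\varepsilon))+d(z,-S(y^*,\varepsilon))<2+\varepsilon$ for every $z\in S_X$. $L^1(\mu,X)$ is the Lebesgue–Bochner space. *)

theory Defs
  imports "HOL-Analysis.Analysis"
begin

text \<open>A (semi)normed real vector space given explicitly by a carrier V (closed under the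
operations), addition, scalar multiplication and a (semi)norm N.\<close>

definition dual_sphere ::
  "'v set \<Rightarrow> ('v \<Rightarrow> 'v \<Rightarrow> 'v) \<Rightarrow> (real \<Rightarrow> 'v \<Rightarrow> 'v) \<Rightarrow> ('v \<Rightarrow> real) \<Rightarrow> ('v \<Rightarrow> real) set" where
  "dual_sphere V add scl N =
     {phi. (\<forall>x\<in>V. \<forall>y\<in>V. phi (add x y) = phi x + phi y)
         \<and> (\<forall>c. \<forall>x\<in>V. phi (scl c x) = c * phi x)
         \<and> bdd_above ((\<lambda>z. \<bar>phi z\<bar>) ` {z\<in>V. N z \<le> 1})
         \<and> (SUP z\<in>{z\<in>V. N z \<le> 1}. \<bar>phi z\<bar>) = 1}"

definition slice ::
  "'v set \<Rightarrow> ('v \<Rightarrow> real) \<Rightarrow> ('v \<Rightarrow> real) \<Rightarrow> real \<Rightarrow> 'v set" where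
  "slice V N phi \<epsilon> = {z\<in>V. N z \<le> 1 \<and> phi z > 1 - \<epsilon>}"

definition setdist ::
  "('v \<Rightarrow> 'v \<Rightarrow> 'v) \<Rightarrow> (real \<Rightarrow> 'v \<Rightarrow> 'v) \<Rightarrow> ('v \<Rightarrow> real) \<Rightarrow> 'v \<Rightarrow> 'v set \<Rightarrow> real" where
  "setdist add scl N x A = (INF a\<in>A. N (add x (scl (-1) a)))"

definition GL_space ::
  "'v set \<Rightarrow> ('v \<Rightarrow> 'v \<Rightarrow> 'v) \<Rightarrow> (real \<Rightarrow> 'v \<Rightarrow> 'v) \<Rightarrow> ('v \<Rightarrow> real) \<Rightarrow> bool" where
  "GL_space V add scl N \<longleftrightarrow>
     (\<forall>x\<in>V. N x = 1 \<longrightarrow> (\<forall>\<epsilon>>0. \<exists>phi\<in>dual_sphere V add scl N.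
        x \<in> slice V N phi \<epsilon> \<and>
        (\<forall>z\<in>V. N z = 1 \<longrightarrow>
           setdist add scl N z (slice V N phi \<epsilon>)
           + setdist add scl N z (scl (-1) ` slice V N phi \<epsilon>) < 2 + \<epsilon>)))"

text \<open>Generalised lushness of a real Banach space (a type).\<close>
definition GL :: "'a::banach itself \<Rightarrow> bool" where
  "GL _ \<longleftrightarrow> GL_space (UNIV :: 'a set) (+) (*\<^sub>R) norm"

text \<open>Strongly (mu-)measurable functions: a.e. limits of simple measurable functions.\<close>
definition strongly_measurable :: "'s measure \<Rightarrow> ('s \<Rightarrow> 'b::banach) \<Rightarrow> bool" where
  "strongly_measurable M f \<longleftrightarrow>
     (\<exists>s. (\<forall>i. simple_function M (s i)) \<and> (AE x in M. (\<lambda>i. s i x) \<longlonglongrightarrow> f x))"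

text \<open>Lebesgue--Bochner space L1(mu,X), represented by its Bochner integrable functions
with the L1 seminorm (vectors differing on a null set have distance 0).\<close>
definition L1 :: "'s measure \<Rightarrow> ('s \<Rightarrow> 'b::banach) set" where
  "L1 M = {f. strongly_measurable M f \<and> (\<integral>\<^sup>+x. ennreal (norm (f x)) \<partial>M) < \<infinity>}"

definition L1norm :: "'s measure \<Rightarrow> ('s \<Rightarrow> 'b::banach) \<Rightarrow> real" where
  "L1norm M f = enn2real (\<integral>\<^sup>+x. ennreal (norm (f x)) \<partial>M)"

definition fadd :: "('s \<Rightarrow> 'b::real_vector) \<Rightarrow> ('s \<Rightarrow> 'b) \<Rightarrow> 's \<Rightarrow> 'b" where
  "fadd f g = (\<lambda>x. f x + g x)"

definition fscale :: "real \<Rightarrow> ('s \<Rightarrow> 'b::real_vector) \<Rightarrow> 's \<Rightarrow> 'b" where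
  "fscale c f = (\<lambda>x. c *\<^sub>R f x)"

end

theory Submission
  imports Defs
begin

lemma ae_limit_measurable:
  fixes f :: "'s \<Rightarrow> 'c::metric_space"
  assumes cm: "complete_measure M"
    and g: "\<And>i. g i \<in> borel_measurable M"
    and lim: "AE x in M. (\<lambda>i. g i x) \<longlonglongrightarrow> f x"
  shows "f \<in> borel_measurable M"
proof -
  interpret complete_measure M by fact
  obtain N where N: "N \<in> null_sets M" "{x\<in>space M. \<not> (\<lambda>i. g i x) \<longlonglongrightarrow> f x} \<subseteq> N"
    using lim unfolding eventually_ae_filter by blast
  have Ns: "N \<in> sets M" using N by auto
  define c where "c = f undefined"
  define g' where "g' i x = (if x \<in> N then c else g i x)" for i x
  define f' where "f' x = (if x \<in> N then c else f x)" for x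
  have "g' i \<in> borel_measurable M" for i
    unfolding g'_def using g Ns by (intro measurable_If_set) auto
  moreover have "(\<lambda>i. g' i x) \<longlonglongrightarrow> f' x" if "x \<in> space M" for x
    using N that by (cases "x \<in> N") (auto simp: g'_def f'_def)
  ultimately have f': "f' \<in> borel_measurable M"
    by (rule borel_measurable_LIMSEQ_metric)
  have ae: "AE x in M. x \<notin> N"
    using N(1) by (rule AE_not_in)
  show ?thesis
  proof (rule borel_measurableI)
    fix S :: "'c set" assume "open S"
    have A: "f' -` S \<inter> space M \<in> sets M"
      using f' \<open>open S\<close> by (simp add: measurable_sets borel_open)
    show "f -` S \<inter> space M \<in> sets M"
    proof (rule in_sets_AE[OF _ A])
      show "AE x in M. (x \<in> f' -` S \<inter> space M) = (x \<in> f -` S \<inter> space M)"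
        using ae by eventually_elim (auto simp: f'_def)
    qed auto
  qed
qed

lemma sm_measurable:
  fixes f :: "'s \<Rightarrow> 'c::banach"
  assumes "complete_measure M" and "strongly_measurable M f"
  shows "f \<in> borel_measurable M"
proof -
  obtain s where s: "\<And>i. simple_function M (s i)" "AE x in M. (\<lambda>i. s i x) \<longlonglongrightarrow> f x"
    using assms(2) unfolding strongly_measurable_def by blast
  show ?thesis
    by (rule ae_limit_measurable[OF assms(1) _ s(2)]) (use s(1) borel_measurable_simple_function in blast)
qed

lemma simple_sm: "simple_function M g \<Longrightarrow> strongly_measurable M g"
  unfolding strongly_measurable_def by (rule exI[of _ "\<lambda>i. g"]) auto

lemma sm_compose2:
  fixes f :: "'s \<Rightarrow> 'b::banach" and g :: "'s \<Rightarrow> 'c::banach"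
    and F :: "'b \<Rightarrow> 'c \<Rightarrow> 'd::banach"
  assumes "strongly_measurable M f" "strongly_measurable M g"
    and F: "\<And>X Y a b. X \<longlonglongrightarrow> a \<Longrightarrow> Y \<longlonglongrightarrow> b \<Longrightarrow> (\<lambda>i. F (X i) (Y i)) \<longlonglongrightarrow> F a b"
  shows "strongly_measurable M (\<lambda>x. F (f x) (g x))"
proof -
  obtain s where s: "\<And>i. simple_function M (s i)" "AE x in M. (\<lambda>i. s i x) \<longlonglongrightarrow> f x"
    using assms(1) unfolding strongly_measurable_def by blast
  obtain t where t: "\<And>i. simple_function M (t i)" "AE x in M. (\<lambda>i. t i x) \<longlonglongrightarrow> g x"
    using assms(2) unfolding strongly_measurable_def by blast
  have "\<forall>i. simple_function M (\<lambda>x. F (s i x) (t i x))"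
    using s(1) t(1) by (auto intro: simple_function_compose2)
  moreover have "AE x in M. (\<lambda>i. F (s i x) (t i x)) \<longlonglongrightarrow> F (f x) (g x)"
    using s(2) t(2) by eventually_elim (rule F)
  ultimately show ?thesis unfolding strongly_measurable_def
    by (intro exI[where x="\<lambda>i x. F (s i x) (t i x)"]) simp
qed

lemma sm_compose_simple:
  fixes f :: "'s \<Rightarrow> 'b::banach" and u :: "'s \<Rightarrow> 'c"
    and F :: "'c \<Rightarrow> 'b \<Rightarrow> 'd::banach"
  assumes u: "simple_function M u" and "strongly_measurable M f"
    and F: "\<And>a X b. X \<longlonglongrightarrow> b \<Longrightarrow> (\<lambda>i. F a (X i)) \<longlonglongrightarrow> F a b"
  shows "strongly_measurable M (\<lambda>x. F (u x) (f x))"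
proof -
  obtain s where s: "\<And>i. simple_function M (s i)" "AE x in M. (\<lambda>i. s i x) \<longlonglongrightarrow> f x"
    using assms(2) unfolding strongly_measurable_def by blast
  have "\<forall>i. simple_function M (\<lambda>x. F (u x) (s i x))"
    using s(1) u by (auto intro: simple_function_compose2)
  moreover have "AE x in M. (\<lambda>i. F (u x) (s i x)) \<longlonglongrightarrow> F (u x) (f x)"
    using s(2) by eventually_elim (rule F)
  ultimately show ?thesis unfolding strongly_measurable_def
    by (intro exI[where x="\<lambda>i x. F (u x) (s i x)"]) simp
qed

lemma L1_norm:
  fixes f :: "'s \<Rightarrow> 'b::banach"
  assumes cm: "complete_measure M" and f: "f \<in> L1 M"
  shows "integrable M (\<lambda>x. norm (f x))" "L1norm M f = (\<integral>x. norm (f x) \<partial>M)"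
proof -
  have sm: "strongly_measurable M (\<lambda>x. norm (f x))"
    using sm_compose2[of M f f "\<lambda>a b. norm a"] f unfolding L1_def
    by (auto intro: tendsto_norm)
  have meas: "(\<lambda>x. norm (f x)) \<in> borel_measurable M"
    by (rule sm_measurable[OF cm sm])
  have fin: "(\<integral>\<^sup>+x. ennreal (norm (f x)) \<partial>M) < \<infinity>"
    using f unfolding L1_def by auto
  show int: "integrable M (\<lambda>x. norm (f x))"
    using meas fin by (simp add: integrable_iff_bounded)
  have "(\<integral>\<^sup>+x. ennreal (norm (f x)) \<partial>M) = ennreal (\<integral>x. norm (f x) \<partial>M)"
    by (rule nn_integral_eq_integral[OF int]) auto
  then show "L1norm M f = (\<integral>x. norm (f x) \<partial>M)"
    unfolding L1norm_def by simp
qed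

lemma L1_lincomb:
  fixes f g :: "'s \<Rightarrow> 'b::banach"
  assumes cm: "complete_measure M" and f: "f \<in> L1 M" and g: "g \<in> L1 M"
  shows "(\<lambda>x. f x + c *\<^sub>R g x) \<in> L1 M"
proof -
  have T: "(\<lambda>i. X i + c *\<^sub>R Y i) \<longlonglongrightarrow> a + c *\<^sub>R b"
    if "X \<longlonglongrightarrow> a" "Y \<longlonglongrightarrow> b" for X Y :: "nat \<Rightarrow> 'b" and a b
    using that by (intro tendsto_intros)
  have sfg: "strongly_measurable M f" "strongly_measurable M g" using f g by (auto simp: L1_def)
  have sm: "strongly_measurable M (\<lambda>x. f x + c *\<^sub>R g x)"
    by (rule sm_compose2[where F="\<lambda>a b. a + c *\<^sub>R b", simplified, OF sfg T])
  have mf: "(\<lambda>x. norm (f x)) \<in> borel_measurable M" and mg: "(\<lambda>x. norm (g x)) \<in> borel_measurable M"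
    using L1_norm(1)[OF cm f] L1_norm(1)[OF cm g] by auto
  have "(\<integral>\<^sup>+x. ennreal (norm (f x + c *\<^sub>R g x)) \<partial>M)
      \<le> (\<integral>\<^sup>+x. ennreal (norm (f x)) + ennreal (\<bar>c\<bar> * norm (g x)) \<partial>M)"
  proof (intro nn_integral_mono)
    fix x
    have "norm (f x + c *\<^sub>R g x) \<le> norm (f x) + \<bar>c\<bar> * norm (g x)"
      using norm_triangle_ineq[of "f x" "c *\<^sub>R g x"] by simp
    then show "ennreal (norm (f x + c *\<^sub>R g x)) \<le> ennreal (norm (f x)) + ennreal (\<bar>c\<bar> * norm (g x))"
      by (metis abs_ge_zero ennreal_leI ennreal_plus mult_nonneg_nonneg norm_ge_zero)
  qed
  also have "\<dots> = (\<integral>\<^sup>+x. ennreal (norm (f x)) \<partial>M) + (\<integral>\<^sup>+x. ennreal (\<bar>c\<bar> * norm (g x)) \<partial>M)"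
    by (rule nn_integral_add) (use mf mg in auto)
  also have "(\<integral>\<^sup>+x. ennreal (\<bar>c\<bar> * norm (g x)) \<partial>M) = ennreal \<bar>c\<bar> * (\<integral>\<^sup>+x. ennreal (norm (g x)) \<partial>M)"
    by (subst ennreal_mult) (auto intro!: nn_integral_cmult mg)
  also have "(\<integral>\<^sup>+x. ennreal (norm (f x)) \<partial>M) + ennreal \<bar>c\<bar> * (\<integral>\<^sup>+x. ennreal (norm (g x)) \<partial>M) < \<infinity>"
    using f g unfolding L1_def by (simp add: ennreal_mult_less_top)
  finally show ?thesis using sm unfolding L1_def by auto
qed

lemma simple_L1:
  assumes "simple_function M g" "(\<integral>\<^sup>+x. ennreal (norm (g x)) \<partial>M) < \<infinity>"
  shows "g \<in> L1 M"
  using assms simple_sm unfolding L1_def by auto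

lemma L1_density:
  fixes f :: "'s \<Rightarrow> 'b::banach"
  assumes cm: "complete_measure M" and f: "f \<in> L1 M" and d: "\<delta> > 0"
  shows "\<exists>w. simple_function M w \<and> w \<in> L1 M \<and> (\<integral>x. norm (f x - w x) \<partial>M) < \<delta>"
proof -
  obtain s where s: "\<And>i. simple_function M (s i)" "AE x in M. (\<lambda>i. s i x) \<longlonglongrightarrow> f x"
    using f unfolding L1_def strongly_measurable_def by blast
  have nf[measurable]: "(\<lambda>x. norm (f x)) \<in> borel_measurable M"
    using L1_norm(1)[OF cm f] by auto
  have ns[measurable]: "(\<lambda>x. norm (s i x)) \<in> borel_measurable M" for i
    using borel_measurable_simple_function[OF s(1)] by measurable
  define A where "A i = {x\<in>space M. norm (s i x) \<le> 2 * norm (f x)}" for i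
  have A[measurable]: "A i \<in> sets M" for i
    unfolding A_def by measurable
  define t where "t i x = indicator (A i) x *\<^sub>R s i x" for i x
  have st: "simple_function M (t i)" for i
    unfolding t_def using s(1) A by (intro simple_function_compose2[where h="\<lambda>a b. a *\<^sub>R b"]) auto
  have tb: "norm (t i x) \<le> 2 * norm (f x)" if "x \<in> space M" for i x
    using that by (auto simp: t_def A_def indicator_def)
  have fin_f: "(\<integral>\<^sup>+x. ennreal (norm (f x)) \<partial>M) < \<infinity>"
    using f unfolding L1_def by auto
  have tL1: "t i \<in> L1 M" for i
  proof (rule simple_L1[OF st])
    have "(\<integral>\<^sup>+x. ennreal (norm (t i x)) \<partial>M) \<le> (\<integral>\<^sup>+x. ennreal (2 * norm (f x)) \<partial>M)"
      by (intro nn_integral_mono_AE AE_I2) (auto intro!: ennreal_leI simp: tb)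
    also have "\<dots> = ennreal 2 * (\<integral>\<^sup>+x. ennreal (norm (f x)) \<partial>M)"
      by (simp add: ennreal_mult nn_integral_cmult)
    also have "\<dots> < \<infinity>" using fin_f by (simp add: ennreal_mult_less_top)
    finally show "(\<integral>\<^sup>+x. ennreal (norm (t i x)) \<partial>M) < \<infinity>" .
  qed
  define r where "r i x = norm (f x + (-1) *\<^sub>R t i x)" for i x
  have rint: "integrable M (r i)" for i
    using L1_norm(1)[OF cm L1_lincomb[OF cm f tL1[of i], of "-1"]] unfolding r_def by simp
  have rm[measurable]: "r i \<in> borel_measurable M" for i using rint by auto
  have rb: "norm (r i x) \<le> 3 * norm (f x)" if "x \<in> space M" for i x
  proof -
    have "r i x \<le> norm (f x) + norm (t i x)"
      unfolding r_def using norm_triangle_ineq[of "f x" "- t i x"] by simp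
    then show ?thesis using tb[OF that, of i] by (simp add: r_def)
  qed
  have rl: "AE x in M. (\<lambda>i. r i x) \<longlonglongrightarrow> 0"
    using AE_space s(2)
  proof (eventually_elim)
    fix x assume xs: "x \<in> space M" and lim: "(\<lambda>i. s i x) \<longlonglongrightarrow> f x"
    show "(\<lambda>i. r i x) \<longlonglongrightarrow> 0"
    proof (cases "f x = 0")
      case True
      then have "t i x = 0" for i using tb[OF xs, of i] by simp
      then show ?thesis using True by (simp add: r_def)
    next
      case False
      have "(\<lambda>i. norm (s i x)) \<longlonglongrightarrow> norm (f x)" using lim by (rule tendsto_norm)
      moreover have "norm (f x) < 2 * norm (f x)" using False by simp
      ultimately have "eventually (\<lambda>i. norm (s i x) < 2 * norm (f x)) sequentially"
        by (rule order_tendstoD)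
      then have ev: "eventually (\<lambda>i. t i x = s i x) sequentially"
        by eventually_elim (use xs in \<open>auto simp: t_def A_def\<close>)
      have tl: "(\<lambda>i. t i x) \<longlonglongrightarrow> f x"
        using tendsto_cong[OF ev] lim by simp
      then have "(\<lambda>i. f x + (-1) *\<^sub>R t i x) \<longlonglongrightarrow> 0"
        using tendsto_diff[OF tendsto_const[of "f x"] tl] by simp
      then show ?thesis unfolding r_def by (rule tendsto_norm_zero)
    qed
  qed
  have "(\<lambda>i. (\<integral>\<^sup>+x. norm (0 - r i x) \<partial>M)) \<longlonglongrightarrow> 0"
  proof (rule nn_integral_dominated_convergence_norm[where w="\<lambda>x. 3 * norm (f x)"])
    show "(\<integral>\<^sup>+x. ennreal (3 * norm (f x)) \<partial>M) < \<infinity>"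
      using fin_f by (simp add: ennreal_mult nn_integral_cmult ennreal_mult_less_top)
    show "\<And>j. AE x in M. norm (r j x) \<le> 3 * norm (f x)"
      using rb by (auto intro: AE_I2)
  qed (use rl in auto)
  then obtain i where i: "(\<integral>\<^sup>+x. norm (0 - r i x) \<partial>M) < ennreal \<delta>"
    using d by (metis (no_types, lifting) ennreal_less_zero_iff eventually_sequentially order_refl order_tendstoD(2))
  have "(\<integral>\<^sup>+x. norm (0 - r i x) \<partial>M) = (\<integral>\<^sup>+x. ennreal (r i x) \<partial>M)"
    by (simp add: r_def)
  also have "\<dots> = ennreal (\<integral>x. r i x \<partial>M)"
    by (rule nn_integral_eq_integral[OF rint]) (auto simp: r_def)
  finally have lt: "ennreal (\<integral>x. r i x \<partial>M) < ennreal \<delta>"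
    using i by simp
  have "(\<integral>x. r i x \<partial>M) < \<delta>"
  proof (rule ccontr)
    assume "\<not> (\<integral>x. r i x \<partial>M) < \<delta>"
    then have "ennreal \<delta> \<le> ennreal (\<integral>x. r i x \<partial>M)" by (intro ennreal_leI) simp
    with lt show False by simp
  qed
  then show ?thesis
    using st tL1 by (intro exI[of _ "t i"]) (auto simp: r_def)
qed

lemma dual_X:
  fixes phi :: "'b::real_normed_vector \<Rightarrow> real"
  assumes "phi \<in> dual_sphere UNIV (+) (*\<^sub>R) norm"
  shows "bounded_linear phi" "\<And>z. \<bar>phi z\<bar> \<le> norm z"
proof -
  have add: "\<And>x y. phi (x + y) = phi x + phi y" and scl: "\<And>c x. phi (c *\<^sub>R x) = c * phi x"
    and bdd: "bdd_above ((\<lambda>z. \<bar>phi z\<bar>) ` {z. norm z \<le> 1})"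
    and sup: "(SUP z\<in>{z. norm z \<le> 1}. \<bar>phi z\<bar>) = 1"
    using assms unfolding dual_sphere_def by auto
  show bnd: "\<bar>phi z\<bar> \<le> norm z" for z
  proof (cases "z = 0")
    case True
    then show ?thesis using scl[of 0 0] by simp
  next
    case False
    have "\<bar>phi (inverse (norm z) *\<^sub>R z)\<bar> \<le> (SUP z\<in>{z. norm z \<le> 1}. \<bar>phi z\<bar>)"
      by (rule cSUP_upper[OF _ bdd]) (use False in simp)
    then have "\<bar>phi z\<bar> / norm z \<le> 1"
      using sup False by (simp add: scl abs_mult divide_inverse_commute)
    then show ?thesis using False by (simp add: divide_le_eq)
  qed
  show "bounded_linear phi"
    by (rule bounded_linear_intro[where K=1]) (use add scl bnd in \<open>auto simp: abs_le_iff\<close>)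
qed

definition goodX :: "('b::real_normed_vector \<Rightarrow> real) \<Rightarrow> real \<Rightarrow> bool" where
  "goodX phi e \<longleftrightarrow> phi \<in> dual_sphere UNIV (+) (*\<^sub>R) norm \<and>
     (\<forall>z. norm z = 1 \<longrightarrow> (\<exists>a b. norm a \<le> 1 \<and> norm b \<le> 1 \<and> phi a > 1 - e \<and> phi b > 1 - e
        \<and> norm (z - a) + norm (z + b) < 2 + e))"

lemma GL_extract:
  fixes p :: "'b::banach"
  assumes "GL TYPE('b)" "norm p = 1" "e > 0"
  shows "\<exists>phi. goodX phi e \<and> phi p > 1 - e"
proof -
  obtain phi where phi: "phi \<in> dual_sphere UNIV (+) (*\<^sub>R) norm"
    and pS: "p \<in> slice UNIV norm phi e"
    and H: "\<And>z. norm z = 1 \<Longrightarrow> setdist (+) (*\<^sub>R) norm z (slice UNIV norm phi e)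
           + setdist (+) (*\<^sub>R) norm z ((*\<^sub>R) (-1) ` slice UNIV norm phi e) < 2 + e"
    using assms unfolding GL_def GL_space_def by blast
  define S where "S = slice UNIV norm phi e"
  have Sne: "S \<noteq> {}" using pS S_def by auto
  have "\<exists>a b. norm a \<le> 1 \<and> norm b \<le> 1 \<and> phi a > 1 - e \<and> phi b > 1 - e
        \<and> norm (z - a) + norm (z + b) < 2 + e" if z: "norm z = 1" for z
  proof -
    define d1 where "d1 = (INF a\<in>S. norm (z + (-1) *\<^sub>R a))"
    define d2 where "d2 = (INF a\<in>(*\<^sub>R) (-1) ` S. norm (z + (-1) *\<^sub>R a))"
    have lt: "d1 + d2 < 2 + e" using H[OF z] unfolding d1_def d2_def S_def setdist_def by simp
    define \<eta> where "\<eta> = (2 + e - d1 - d2) / 2"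
    have eta: "\<eta> > 0" using lt by (simp add: \<eta>_def)
    have "\<exists>x\<in>(\<lambda>a. norm (z + (-1) *\<^sub>R a)) ` S. x < d1 + \<eta>"
      by (rule cInf_lessD) (use Sne eta in \<open>auto simp: d1_def\<close>)
    then obtain a where a: "a \<in> S" "norm (z + (-1) *\<^sub>R a) < d1 + \<eta>" by blast
    have "\<exists>x\<in>(\<lambda>a. norm (z + (-1) *\<^sub>R a)) ` ((*\<^sub>R) (-1) ` S). x < d2 + \<eta>"
      by (rule cInf_lessD) (use Sne eta in \<open>auto simp: d2_def\<close>)
    then obtain b' where b': "b' \<in> (*\<^sub>R) (-1) ` S" "norm (z + (-1) *\<^sub>R b') < d2 + \<eta>" by blast
    then obtain b where b: "b \<in> S" "b' = - b" by auto
    have e2: "d1 + d2 + 2 * \<eta> = 2 + e" unfolding \<eta>_def by (simp add: field_simps)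
    show ?thesis
      by (rule exI[of _ a], rule exI[of _ b]) (use a b b' e2 in \<open>auto simp: S_def slice_def\<close>)
  qed
  then show ?thesis using phi pS unfolding goodX_def slice_def by auto
qed

lemma phi_int:
  fixes f :: "'s \<Rightarrow> 'b::banach" and Y :: "'c \<Rightarrow> 'b \<Rightarrow> real"
  assumes cm: "complete_measure M" and u: "simple_function M u"
    and Yd: "\<And>v. Y v \<in> dual_sphere UNIV (+) (*\<^sub>R) norm"
    and f: "f \<in> L1 M"
  shows "integrable M (\<lambda>s. Y (u s) (f s))"
    "\<bar>\<integral>s. Y (u s) (f s) \<partial>M\<bar> \<le> L1norm M f"
proof -
  have T: "(\<lambda>i. Y a (X i)) \<longlonglongrightarrow> Y a b" if "X \<longlonglongrightarrow> b" for a X b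
    using bounded_linear.tendsto[OF dual_X(1)[OF Yd[of a]] that] .
  have sm: "strongly_measurable M (\<lambda>s. Y (u s) (f s))"
    by (rule sm_compose_simple[where F=Y, OF u _ T]) (use f in \<open>auto simp: L1_def\<close>)
  have meas: "(\<lambda>s. Y (u s) (f s)) \<in> borel_measurable M"
    by (rule sm_measurable[OF cm sm])
  have bnd: "\<bar>Y (u s) (f s)\<bar> \<le> norm (f s)" for s
    using dual_X(2)[OF Yd] by blast
  show int: "integrable M (\<lambda>s. Y (u s) (f s))"
    by (rule Bochner_Integration.integrable_bound[OF L1_norm(1)[OF cm f] meas]) (use bnd in auto)
  have "\<bar>\<integral>s. Y (u s) (f s) \<partial>M\<bar> \<le> (\<integral>s. norm (Y (u s) (f s)) \<partial>M)"
    using integral_norm_bound[of M "\<lambda>s. Y (u s) (f s)"] by simp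
  also have "\<dots> \<le> (\<integral>s. norm (f s) \<partial>M)"
    by (rule integral_mono[OF integrable_norm[OF int] L1_norm(1)[OF cm f]]) (use bnd in auto)
  finally show "\<bar>\<integral>s. Y (u s) (f s) \<partial>M\<bar> \<le> L1norm M f"
    using L1_norm(2)[OF cm f] by simp
qed

lemma phi_dual:
  fixes Y :: "'c \<Rightarrow> 'b::banach \<Rightarrow> real"
  assumes cm: "complete_measure M" and u: "simple_function M u"
    and Yd: "\<And>v. Y v \<in> dual_sphere UNIV (+) (*\<^sub>R) norm"
    and C: "C = {s\<in>space M. u s = v0}" "C \<in> sets M" "0 < measure M C" "emeasure M C < \<infinity>"
  shows "(\<lambda>f::'s \<Rightarrow> 'b. \<integral>s. Y (u s) (f s) \<partial>M) \<in> dual_sphere (L1 M) fadd fscale (L1norm M)"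
proof -
  define \<phi> where "\<phi> = (\<lambda>f::'s \<Rightarrow> 'b. \<integral>s. Y (u s) (f s) \<partial>M)"
  have Yadd: "Y v (a + b) = Y v a + Y v b" and Yscl: "Y v (c *\<^sub>R a) = c * Y v a" for v a b c
    using Yd[of v] unfolding dual_sphere_def by auto
  have add: "\<phi> (fadd f g) = \<phi> f + \<phi> g" if "f \<in> L1 M" "g \<in> L1 M" for f g
    unfolding \<phi>_def fadd_def Yadd
    by (rule Bochner_Integration.integral_add[OF phi_int(1)[OF cm u Yd that(1)] phi_int(1)[OF cm u Yd that(2)]])
  have scl: "\<phi> (fscale c f) = c * \<phi> f" for c f
    unfolding \<phi>_def fscale_def Yscl by simp
  have bnd: "\<bar>\<phi> f\<bar> \<le> L1norm M f" if "f \<in> L1 M" for f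
    unfolding \<phi>_def by (rule phi_int(2)[OF cm u Yd that])
  define B where "B = {z \<in> L1 M. L1norm M (z::'s \<Rightarrow> 'b) \<le> 1}"
  have bdd: "bdd_above ((\<lambda>z. \<bar>\<phi> z\<bar>) ` B)"
    by (rule bdd_aboveI2[where M=1]) (use bnd in \<open>force simp: B_def\<close>)
  define m where "m = measure M C"
  have m: "m > 0" using C by (simp add: m_def)
  define emb where "emb a = (\<lambda>s. (indicator C s / m) *\<^sub>R a)" for a :: 'b
  have Csub: "C \<subseteq> space M" using C(1) by auto
  have embL1: "emb a \<in> L1 M" for a
  proof (rule simple_L1)
    show "simple_function M (emb a)"
      unfolding emb_def using C(2)
      by (intro simple_function_compose2[where h="\<lambda>x y. (x / m) *\<^sub>R y"] simple_function_indicator) auto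
    have "(\<integral>\<^sup>+s. ennreal (norm (emb a s)) \<partial>M) = (\<integral>\<^sup>+s. ennreal (norm a / m) * indicator C s \<partial>M)"
      by (rule nn_integral_cong) (use m in \<open>auto simp: emb_def indicator_def\<close>)
    also have "\<dots> = ennreal (norm a / m) * emeasure M C"
      by (rule nn_integral_cmult_indicator[OF C(2)])
    also have "\<dots> < \<infinity>" using C(4) by (simp add: ennreal_mult_less_top)
    finally show "(\<integral>\<^sup>+s. ennreal (norm (emb a s)) \<partial>M) < \<infinity>" .
  qed
  have embN: "L1norm M (emb a) = norm a" for a
  proof -
    have "L1norm M (emb a) = (\<integral>s. norm (emb a s) \<partial>M)" by (rule L1_norm(2)[OF cm embL1])
    also have "\<dots> = (\<integral>s. (norm a / m) * indicator C s \<partial>M)"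
      by (rule Bochner_Integration.integral_cong) (use m in \<open>auto simp: emb_def indicator_def\<close>)
    also have "\<dots> = norm a" using Csub m by (simp add: m_def Int_absorb2)
    finally show ?thesis .
  qed
  have embP: "\<phi> (emb a) = Y v0 a" for a
  proof -
    have "\<phi> (emb a) = (\<integral>s. (Y v0 a / m) * indicator C s \<partial>M)"
      unfolding \<phi>_def
      by (rule Bochner_Integration.integral_cong) (auto simp: emb_def indicator_def Yscl C(1))
    also have "\<dots> = Y v0 a" using Csub m by (simp add: m_def Int_absorb2)
    finally show ?thesis .
  qed
  have sup1: "(SUP z\<in>B. \<bar>\<phi> z\<bar>) \<le> 1"
  proof (rule cSUP_least)
    show "B \<noteq> {}" using embL1[of 0] embN[of 0] by (auto simp: B_def)
  qed (use bnd in \<open>force simp: B_def\<close>)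
  have "(SUP a\<in>{a::'b. norm a \<le> 1}. \<bar>Y v0 a\<bar>) \<le> (SUP z\<in>B. \<bar>\<phi> z\<bar>)"
  proof (rule cSUP_mono[OF _ bdd])
    show "{a::'b. norm a \<le> 1} \<noteq> {}" by (auto intro: exI[of _ 0])
    fix a :: 'b assume "a \<in> {a. norm a \<le> 1}"
    then show "\<exists>z\<in>B. \<bar>Y v0 a\<bar> \<le> \<bar>\<phi> z\<bar>"
      using embL1[of a] embN[of a] embP[of a] by (intro bexI[of _ "emb a"]) (auto simp: B_def)
  qed
  moreover have "(SUP a\<in>{a::'b. norm a \<le> 1}. \<bar>Y v0 a\<bar>) = 1"
    using Yd[of v0] unfolding dual_sphere_def by auto
  ultimately have "(SUP z\<in>B. \<bar>\<phi> z\<bar>) = 1" using sup1 by linarith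
  then show ?thesis
    using add scl bdd unfolding dual_sphere_def B_def \<phi>_def by auto
qed

lemma L1_zero: "(\<lambda>s. 0) \<in> L1 M"
  by (rule simple_L1) auto

lemma L1_scale:
  assumes cm: "complete_measure M" and g: "g \<in> L1 M"
  shows "(\<lambda>s. c *\<^sub>R g s) \<in> L1 M"
  using L1_lincomb[OF cm L1_zero g, of c] by simp

lemma L1_int_diff:
  fixes f g :: "'s \<Rightarrow> 'b::banach"
  assumes cm: "complete_measure M" and "f \<in> L1 M" "g \<in> L1 M"
  shows "integrable M (\<lambda>s. norm (f s - g s))"
  using L1_norm(1)[OF cm L1_lincomb[OF assms, of "-1"]] by simp

lemma L1_int_sum:
  fixes f g :: "'s \<Rightarrow> 'b::banach"
  assumes cm: "complete_measure M" and "f \<in> L1 M" "g \<in> L1 M"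
  shows "integrable M (\<lambda>s. norm (f s + g s))"
  using L1_norm(1)[OF cm L1_lincomb[OF assms, of "1"]] by simp

lemma L1norm_comb:
  fixes f g :: "'s \<Rightarrow> 'b::banach"
  assumes cm: "complete_measure M" and "f \<in> L1 M" "g \<in> L1 M"
  shows "L1norm M (fadd f (fscale c g)) = (\<integral>s. norm (f s + c *\<^sub>R g s) \<partial>M)"
proof -
  have "fadd f (fscale c g) = (\<lambda>s. f s + c *\<^sub>R g s)" by (simp add: fadd_def fscale_def)
  then show ?thesis using L1_norm(2)[OF cm L1_lincomb[OF assms, of c]] by simp
qed

lemma pw:
  fixes w a b :: "'b::real_normed_vector" and Yv :: "'b \<Rightarrow> real"
  assumes Yscl: "\<And>c p. Yv (c *\<^sub>R p) = c * Yv p"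
    and H: "norm a \<le> 1" "norm b \<le> 1" "Yv a > 1 - e" "Yv b > 1 - e"
       "norm (w /\<^sub>R norm w - a) + norm (w /\<^sub>R norm w + b) < 2 + e"
  shows "norm (norm w *\<^sub>R a) \<le> norm w" "norm (norm w *\<^sub>R b) \<le> norm w"
    "Yv (norm w *\<^sub>R a) \<ge> (1 - e) * norm w" "Yv (norm w *\<^sub>R b) \<ge> (1 - e) * norm w"
    "norm (w - norm w *\<^sub>R a) + norm (w + norm w *\<^sub>R b) \<le> (2 + e) * norm w"
proof -
  show "norm (norm w *\<^sub>R a) \<le> norm w" "norm (norm w *\<^sub>R b) \<le> norm w"
    using H(1,2) by (simp_all add: mult_left_le)
  show "Yv (norm w *\<^sub>R a) \<ge> (1 - e) * norm w" "Yv (norm w *\<^sub>R b) \<ge> (1 - e) * norm w"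
    using H(3,4) by (simp_all add: Yscl mult_left_mono mult.commute)
  show "norm (w - norm w *\<^sub>R a) + norm (w + norm w *\<^sub>R b) \<le> (2 + e) * norm w"
  proof (cases "w = 0")
    case True then show ?thesis by simp
  next
    case False
    define q where "q = w /\<^sub>R norm w"
    have wq: "w = norm w *\<^sub>R q" using False by (simp add: q_def)
    have e1: "w - norm w *\<^sub>R a = norm w *\<^sub>R (q - a)"
      by (subst wq, simp add: algebra_simps)
    have e2: "w + norm w *\<^sub>R b = norm w *\<^sub>R (q + b)"
      by (subst wq, simp add: algebra_simps)
    have "norm (w - norm w *\<^sub>R a) + norm (w + norm w *\<^sub>R b) = norm w * (norm (q - a) + norm (q + b))"
      unfolding e1 e2 norm_scaleR by (simp add: distrib_left)
    also have "\<dots> \<le> norm w * (2 + e)"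
      using H(5) by (intro mult_left_mono) (auto simp: q_def)
    finally show ?thesis by (simp add: mult.commute)
  qed
qed

lemma GH_exists:
  fixes Y :: "'c \<Rightarrow> 'b::real_normed_vector \<Rightarrow> real"
  assumes Yg: "\<And>v. goodX (Y v) e"
  shows "\<exists>G H. \<forall>v p. norm (G v p) \<le> norm p \<and> norm (H v p) \<le> norm p
     \<and> Y v (G v p) \<ge> (1 - e) * norm p \<and> Y v (H v p) \<ge> (1 - e) * norm p
     \<and> norm (p - G v p) + norm (p + H v p) \<le> (2 + e) * norm p"
proof -
  define P where "P v p ab \<longleftrightarrow> norm (fst ab) \<le> norm p \<and> norm (snd ab) \<le> norm p
     \<and> Y v (fst ab) \<ge> (1 - e) * norm p \<and> Y v (snd ab) \<ge> (1 - e) * norm p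
     \<and> norm (p - fst ab) + norm (p + snd ab) \<le> (2 + e) * norm p" for v p and ab :: "'b \<times> 'b"
  have ex: "\<exists>ab. P v p ab" for v p
  proof (cases "p = 0")
    case True
    have Yscl: "\<And>c p. Y v (c *\<^sub>R p) = c * Y v p" using Yg[of v] unfolding goodX_def dual_sphere_def by auto
    have "Y v 0 = 0" using Yscl[of 0 0] by simp
    then show ?thesis using True by (intro exI[of _ "(0, 0)"]) (simp add: P_def)
  next
    case False
    have Yscl: "\<And>c p. Y v (c *\<^sub>R p) = c * Y v p" using Yg[of v] unfolding goodX_def dual_sphere_def by auto
    have "norm (p /\<^sub>R norm p) = 1" using False by simp
    then obtain a b where ab: "norm a \<le> 1" "norm b \<le> 1" "Y v a > 1 - e" "Y v b > 1 - e"
      "norm (p /\<^sub>R norm p - a) + norm (p /\<^sub>R norm p + b) < 2 + e"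
      using Yg[of v] unfolding goodX_def by blast
    show ?thesis
      using pw[where Yv="Y v", OF Yscl ab]
      by (intro exI[of _ "(norm p *\<^sub>R a, norm p *\<^sub>R b)"]) (simp add: P_def)
  qed
  then have "\<forall>vp. \<exists>ab. P (fst vp) (snd vp) ab" by auto
  then obtain F where F: "\<And>vp. P (fst vp) (snd vp) (F vp)" by metis
  show ?thesis
  proof (rule exI[of _ "\<lambda>v p. fst (F (v, p))"], rule exI[of _ "\<lambda>v p. snd (F (v, p))"], intro allI)
    fix v p show "norm (fst (F (v, p))) \<le> norm p \<and> norm (snd (F (v, p))) \<le> norm p
     \<and> Y v (fst (F (v, p))) \<ge> (1 - e) * norm p \<and> Y v (snd (F (v, p))) \<ge> (1 - e) * norm p
     \<and> norm (p - fst (F (v, p))) + norm (p + snd (F (v, p))) \<le> (2 + e) * norm p"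
      using F[of "(v, p)"] unfolding P_def by simp
  qed
qed

lemma z_part:
  fixes Y :: "'b \<Rightarrow> 'b::banach \<Rightarrow> real" and u :: "'s \<Rightarrow> 'b" and z :: "'s \<Rightarrow> 'b"
  assumes cm: "complete_measure M" and u: "simple_function M u"
    and Yg: "\<And>v. goodX (Y v) e" and e: "e > 0" and d: "\<delta> > 0" "\<delta> < 1"
    and z: "z \<in> L1 M" and zn: "L1norm M z = 1"
  shows "\<exists>g h. g \<in> L1 M \<and> h \<in> L1 M \<and> L1norm M g \<le> 1 \<and> L1norm M h \<le> 1
    \<and> (\<integral>s. Y (u s) (g s) \<partial>M) \<ge> 1 - e \<and> (\<integral>s. Y (u s) (h s) \<partial>M) \<ge> 1 - e
    \<and> (\<integral>s. norm (z s - g s) \<partial>M) + (\<integral>s. norm (z s + h s) \<partial>M) < 4 * \<delta> + (2 + e) * (1 + \<delta>)"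
proof -
  have Yd: "\<And>v. Y v \<in> dual_sphere UNIV (+) (*\<^sub>R) norm" using Yg unfolding goodX_def by auto
  have Yscl: "\<And>v c p. Y v (c *\<^sub>R p) = c * Y v p" using Yd unfolding dual_sphere_def by auto
  obtain G H where GH: "\<And>v p. norm (G v p) \<le> norm p" "\<And>v p. norm (H v p) \<le> norm p"
     "\<And>v p. Y v (G v p) \<ge> (1 - e) * norm p" "\<And>v p. Y v (H v p) \<ge> (1 - e) * norm p"
     "\<And>v p. norm (p - G v p) + norm (p + H v p) \<le> (2 + e) * norm p"
    using GH_exists[where Y=Y and e=e, OF Yg] by blast
  obtain w where w: "simple_function M w" "w \<in> L1 M" "(\<integral>s. norm (z s - w s) \<partial>M) < \<delta>"
    using L1_density[OF cm z d(1)] by blast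
  have Iz: "integrable M (\<lambda>s. norm (z s))" using L1_norm(1)[OF cm z] .
  have Iw: "integrable M (\<lambda>s. norm (w s))" using L1_norm(1)[OF cm w(2)] .
  have Izw: "integrable M (\<lambda>s. norm (z s - w s))" using L1_int_diff[OF cm z w(2)] .
  have zint: "(\<integral>s. norm (z s) \<partial>M) = 1" using L1_norm(2)[OF cm z] zn by simp
  define W where "W = (\<integral>s. norm (w s) \<partial>M)"
  have "W \<le> (\<integral>s. norm (z s - w s) + norm (z s) \<partial>M)"
    unfolding W_def
    by (rule integral_mono[OF Iw Bochner_Integration.integrable_add[OF Izw Iz]])
       (metis add.commute norm_triangle_ineq3 diff_diff_cancel norm_minus_commute order.trans norm_triangle_sub)
  also have "\<dots> = (\<integral>s. norm (z s - w s) \<partial>M) + 1"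
    using Bochner_Integration.integral_add[OF Izw Iz] zint by simp
  finally have W1: "W \<le> 1 + \<delta>" using w(3) by simp
  have "1 \<le> (\<integral>s. norm (z s - w s) + norm (w s) \<partial>M)"
    unfolding zint[symmetric]
    by (rule integral_mono[OF Iz Bochner_Integration.integrable_add[OF Izw Iw]])
       (metis add.commute norm_triangle_sub)
  also have "\<dots> = (\<integral>s. norm (z s - w s) \<partial>M) + W"
    using Bochner_Integration.integral_add[OF Izw Iw] W_def by simp
  finally have W2: "1 - \<delta> \<le> W" using w(3) by simp
  have Wpos: "W > 0" using W2 d by simp
  have Wabs: "\<bar>1 - 1 / W\<bar> * W = \<bar>W - 1\<bar>"
    using Wpos by (simp add: abs_mult[symmetric] field_simps)
  have Wd: "\<bar>W - 1\<bar> \<le> \<delta>" using W1 W2 by simp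
  \<comment> \<open>the functions\<close>
  define g0 where "g0 s = G (u s) (w s)" for s
  define h0 where "h0 s = H (u s) (w s)" for s
  have fin_w: "(\<integral>\<^sup>+s. ennreal (norm (w s)) \<partial>M) < \<infinity>" using w(2) unfolding L1_def by auto
  have g0L1: "g0 \<in> L1 M"
  proof (rule simple_L1)
    show "simple_function M g0" unfolding g0_def using u w(1) by (rule simple_function_compose2)
    have "(\<integral>\<^sup>+s. ennreal (norm (g0 s)) \<partial>M) \<le> (\<integral>\<^sup>+s. ennreal (norm (w s)) \<partial>M)"
      by (intro nn_integral_mono ennreal_leI) (simp add: g0_def GH(1))
    then show "(\<integral>\<^sup>+s. ennreal (norm (g0 s)) \<partial>M) < \<infinity>" using fin_w by simp
  qed
  have h0L1: "h0 \<in> L1 M"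
  proof (rule simple_L1)
    show "simple_function M h0" unfolding h0_def using u w(1) by (rule simple_function_compose2)
    have "(\<integral>\<^sup>+s. ennreal (norm (h0 s)) \<partial>M) \<le> (\<integral>\<^sup>+s. ennreal (norm (w s)) \<partial>M)"
      by (intro nn_integral_mono ennreal_leI) (simp add: h0_def GH(2))
    then show "(\<integral>\<^sup>+s. ennreal (norm (h0 s)) \<partial>M) < \<infinity>" using fin_w by simp
  qed
  define g where "g s = (1 / W) *\<^sub>R g0 s" for s
  define h where "h s = (1 / W) *\<^sub>R h0 s" for s
  have gL1: "g \<in> L1 M" unfolding g_def by (rule L1_scale[OF cm g0L1])
  have hL1: "h \<in> L1 M" unfolding h_def by (rule L1_scale[OF cm h0L1])
  have Ig0: "integrable M (\<lambda>s. norm (g0 s))" using L1_norm(1)[OF cm g0L1] .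
  have Ih0: "integrable M (\<lambda>s. norm (h0 s))" using L1_norm(1)[OF cm h0L1] .
  have ng: "L1norm M g \<le> 1"
  proof -
    have "L1norm M g = (\<integral>s. (1 / W) * norm (g0 s) \<partial>M)"
      using L1_norm(2)[OF cm gL1] Wpos by (simp add: g_def)
    also have "\<dots> = (1 / W) * (\<integral>s. norm (g0 s) \<partial>M)" by simp
    also have "(\<integral>s. norm (g0 s) \<partial>M) \<le> W"
      unfolding W_def by (rule integral_mono[OF Ig0 Iw]) (simp add: g0_def GH(1))
    then have "(1 / W) * (\<integral>s. norm (g0 s) \<partial>M) \<le> 1" using Wpos by (simp add: divide_le_eq)
    finally show ?thesis .
  qed
  have nh: "L1norm M h \<le> 1"
  proof -
    have "L1norm M h = (\<integral>s. (1 / W) * norm (h0 s) \<partial>M)"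
      using L1_norm(2)[OF cm hL1] Wpos by (simp add: h_def)
    also have "\<dots> = (1 / W) * (\<integral>s. norm (h0 s) \<partial>M)" by simp
    also have "(\<integral>s. norm (h0 s) \<partial>M) \<le> W"
      unfolding W_def by (rule integral_mono[OF Ih0 Iw]) (simp add: h0_def GH(2))
    then have "(1 / W) * (\<integral>s. norm (h0 s) \<partial>M) \<le> 1" using Wpos by (simp add: divide_le_eq)
    finally show ?thesis .
  qed
  have pg: "(\<integral>s. Y (u s) (g s) \<partial>M) \<ge> 1 - e"
  proof -
    have eq: "(\<integral>s. Y (u s) (g s) \<partial>M) = (1 / W) * (\<integral>s. Y (u s) (g0 s) \<partial>M)"
      by (simp add: g_def Yscl)
    moreover have "(\<integral>s. Y (u s) (g0 s) \<partial>M) \<ge> (\<integral>s. (1 - e) * norm (w s) \<partial>M)"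
      by (rule integral_mono[OF _ phi_int(1)[OF cm u Yd g0L1]]) (use Iw GH(3) in \<open>auto simp: g0_def\<close>)
    moreover have "(\<integral>s. (1 - e) * norm (w s) \<partial>M) = (1 - e) * W"
      unfolding W_def by (rule integral_mult_right_zero)
    ultimately have "(1 - e) * W \<le> (\<integral>s. Y (u s) (g0 s) \<partial>M)" by linarith
    then have "1 - e \<le> (\<integral>s. Y (u s) (g0 s) \<partial>M) / W" using Wpos by (simp add: le_divide_eq mult.commute)
    then show ?thesis using eq by simp
  qed
  have ph: "(\<integral>s. Y (u s) (h s) \<partial>M) \<ge> 1 - e"
  proof -
    have eq: "(\<integral>s. Y (u s) (h s) \<partial>M) = (1 / W) * (\<integral>s. Y (u s) (h0 s) \<partial>M)"
      by (simp add: h_def Yscl)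
    moreover have "(\<integral>s. Y (u s) (h0 s) \<partial>M) \<ge> (\<integral>s. (1 - e) * norm (w s) \<partial>M)"
      by (rule integral_mono[OF _ phi_int(1)[OF cm u Yd h0L1]]) (use Iw GH(4) in \<open>auto simp: h0_def\<close>)
    moreover have "(\<integral>s. (1 - e) * norm (w s) \<partial>M) = (1 - e) * W"
      unfolding W_def by (rule integral_mult_right_zero)
    ultimately have "(1 - e) * W \<le> (\<integral>s. Y (u s) (h0 s) \<partial>M)" by linarith
    then have "1 - e \<le> (\<integral>s. Y (u s) (h0 s) \<partial>M) / W" using Wpos by (simp add: le_divide_eq mult.commute)
    then show ?thesis using eq by simp
  qed
  define K where "K = (2 + e) + 2 * \<bar>1 - 1 / W\<bar>"
  have pw2: "norm (z s - g s) + norm (z s + h s) \<le> 2 * norm (z s - w s) + K * norm (w s)" for s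
  proof -
    have a1: "norm (z s - g s) \<le> norm (z s - w s) + norm (w s - g0 s) + norm (g0 s - g s)"
    proof -
      have "norm (z s - g s) = norm ((z s - w s) + (w s - g0 s) + (g0 s - g s))" by simp
      also have "\<dots> \<le> norm ((z s - w s) + (w s - g0 s)) + norm (g0 s - g s)" by (rule norm_triangle_ineq)
      also have "\<dots> \<le> norm (z s - w s) + norm (w s - g0 s) + norm (g0 s - g s)"
        using norm_triangle_ineq[of "z s - w s" "w s - g0 s"] by simp
      finally show ?thesis .
    qed
    have a2: "norm (z s + h s) \<le> norm (z s - w s) + norm (w s + h0 s) + norm (h s - h0 s)"
    proof -
      have "norm (z s + h s) = norm ((z s - w s) + (w s + h0 s) + (h s - h0 s))" by simp
      also have "\<dots> \<le> norm ((z s - w s) + (w s + h0 s)) + norm (h s - h0 s)" by (rule norm_triangle_ineq)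
      also have "\<dots> \<le> norm (z s - w s) + norm (w s + h0 s) + norm (h s - h0 s)"
        using norm_triangle_ineq[of "z s - w s" "w s + h0 s"] by simp
      finally show ?thesis .
    qed
    have b1: "norm (g0 s - g s) \<le> \<bar>1 - 1 / W\<bar> * norm (w s)"
    proof -
      have "g0 s - g s = (1 - 1 / W) *\<^sub>R g0 s" by (simp add: g_def algebra_simps)
      then have "norm (g0 s - g s) = \<bar>1 - 1 / W\<bar> * norm (g0 s)" by simp
      then show ?thesis using GH(1)[of "u s" "w s"] by (simp add: g0_def mult_left_mono)
    qed
    have b2: "norm (h s - h0 s) \<le> \<bar>1 - 1 / W\<bar> * norm (w s)"
    proof -
      have "h s - h0 s = (-(1 - 1 / W)) *\<^sub>R h0 s" by (simp add: h_def algebra_simps)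
      then have "norm (h s - h0 s) = \<bar>1 - 1 / W\<bar> * norm (h0 s)" by (simp add: abs_minus_commute)
      then show ?thesis using GH(2)[of "u s" "w s"] by (simp add: h0_def mult_left_mono)
    qed
    have c: "norm (w s - g0 s) + norm (w s + h0 s) \<le> (2 + e) * norm (w s)"
      using GH(5) by (simp add: g0_def h0_def)
    have "K * norm (w s) = (2 + e) * norm (w s) + 2 * (\<bar>1 - 1 / W\<bar> * norm (w s))"
      by (simp add: K_def algebra_simps)
    then show ?thesis using a1 a2 b1 b2 c by linarith
  qed
  have Izg: "integrable M (\<lambda>s. norm (z s - g s))" using L1_int_diff[OF cm z gL1] .
  have Izh: "integrable M (\<lambda>s. norm (z s + h s))" using L1_int_sum[OF cm z hL1] .
  have "(\<integral>s. norm (z s - g s) \<partial>M) + (\<integral>s. norm (z s + h s) \<partial>M)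
      = (\<integral>s. norm (z s - g s) + norm (z s + h s) \<partial>M)"
    using Bochner_Integration.integral_add[OF Izg Izh] by simp
  also have "\<dots> \<le> (\<integral>s. 2 * norm (z s - w s) + K * norm (w s) \<partial>M)"
    by (rule integral_mono[OF Bochner_Integration.integrable_add[OF Izg Izh]])
       (use Izw Iw pw2 in auto)
  also have "\<dots> = 2 * (\<integral>s. norm (z s - w s) \<partial>M) + K * W"
    using Izw Iw by (simp add: W_def)
  also have "K * W = (2 + e) * W + 2 * \<bar>W - 1\<bar>"
    using Wabs by (simp add: K_def algebra_simps)
  finally have fin: "(\<integral>s. norm (z s - g s) \<partial>M) + (\<integral>s. norm (z s + h s) \<partial>M)
      \<le> 2 * (\<integral>s. norm (z s - w s) \<partial>M) + ((2 + e) * W + 2 * \<bar>W - 1\<bar>)" .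
  have "(2 + e) * W \<le> (2 + e) * (1 + \<delta>)" using W1 e by (intro mult_left_mono) auto
  then have "(\<integral>s. norm (z s - g s) \<partial>M) + (\<integral>s. norm (z s + h s) \<partial>M) < 4 * \<delta> + (2 + e) * (1 + \<delta>)"
    using fin w(3) Wd by (smt (verit))
  then show ?thesis using gL1 hL1 ng nh pg ph by blast
qed

lemma v0_exists:
  fixes u :: "'s \<Rightarrow> 'b::banach"
  assumes u: "simple_function M u" and uL: "u \<in> L1 M" and pos: "(\<integral>s. norm (u s) \<partial>M) > 0"
  shows "\<exists>v0. v0 \<noteq> 0 \<and> {s\<in>space M. u s = v0} \<in> sets M \<and> 0 < measure M {s\<in>space M. u s = v0}
     \<and> emeasure M {s\<in>space M. u s = v0} < \<infinity>"
proof (rule ccontr)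
  assume neg: "\<not> ?thesis"
  define C where "C v = {s\<in>space M. u s = v}" for v
  have Cs: "C v \<in> sets M" for v
    using simple_functionD(2)[OF u, of "{v}"] unfolding C_def by (simp add: vimage_def Int_def conj_commute)
  have fin: "emeasure M (C v) < \<infinity>" if "v \<noteq> 0" for v
  proof -
    have "ennreal (norm v) * emeasure M (C v) = (\<integral>\<^sup>+s. ennreal (norm v) * indicator (C v) s \<partial>M)"
      by (rule nn_integral_cmult_indicator[OF Cs, symmetric])
    also have "\<dots> \<le> (\<integral>\<^sup>+s. ennreal (norm (u s)) \<partial>M)"
      by (intro nn_integral_mono) (auto simp: C_def indicator_def)
    also have "\<dots> < \<infinity>" using uL unfolding L1_def by auto
    finally show ?thesis using that by (auto simp: ennreal_mult_less_top)
  qed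
  have null: "C v \<in> null_sets M" if "v \<noteq> 0" for v
  proof -
    have "\<not> 0 < measure M (C v)" using neg that Cs fin unfolding C_def by blast
    then have "measure M (C v) = 0" using measure_nonneg[of M "C v"] by linarith
    then have "emeasure M (C v) = 0" using emeasure_eq_ennreal_measure[of M "C v"] fin[OF that] by simp
    then show ?thesis using Cs by auto
  qed
  have "(\<Union>v\<in>u ` space M - {0}. C v) \<in> null_sets M"
    by (rule null_sets_UN') (use simple_functionD(1)[OF u] null in \<open>auto intro: countable_finite\<close>)
  moreover have "{s\<in>space M. \<not> norm (u s) = 0} \<subseteq> (\<Union>v\<in>u ` space M - {0}. C v)"
    by (auto simp: C_def)
  ultimately have "AE s in M. norm (u s) = 0" by (rule AE_I')
  then have "(\<integral>s. norm (u s) \<partial>M) = 0" by (rule integral_eq_zero_AE)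
  with pos show False by simp
qed

theorem theorem5p1:
  fixes M :: "'s measure"
  assumes "complete_measure M"
    and "sigma_finite_measure M"
    and "GL TYPE('b::banach)"
  shows "GL_space (L1 M :: ('s \<Rightarrow> 'b) set) fadd fscale (L1norm M)"
  unfolding GL_space_def
proof (intro ballI impI allI)
  note cm = assms(1) and GLX = assms(3)
  fix x :: "'s \<Rightarrow> 'b" and \<epsilon> :: real
  assume xV: "x \<in> L1 M" and xn: "L1norm M x = 1" and \<epsilon>: "\<epsilon> > 0"
  define e where "e = min \<epsilon> 1"
  have e: "0 < e" "e \<le> 1" "e \<le> \<epsilon>" using \<epsilon> by (auto simp: e_def)
  define e' where "e' = e / 4"
  define \<delta> where "\<delta> = e / 20"
  have e': "0 < e'" "e' < \<epsilon>" "e' \<le> 1" using e by (auto simp: e'_def)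
  have d: "0 < \<delta>" "\<delta> < 1" using e by (auto simp: \<delta>_def)
  obtain u where u: "simple_function M u" "u \<in> L1 M" "(\<integral>s. norm (x s - u s) \<partial>M) < \<delta>"
    using L1_density[OF cm xV d(1)] by blast
  have Ix: "integrable M (\<lambda>s. norm (x s))" using L1_norm(1)[OF cm xV] .
  have Iu: "integrable M (\<lambda>s. norm (u s))" using L1_norm(1)[OF cm u(2)] .
  have Ixu: "integrable M (\<lambda>s. norm (x s - u s))" using L1_int_diff[OF cm xV u(2)] .
  have xint: "(\<integral>s. norm (x s) \<partial>M) = 1" using L1_norm(2)[OF cm xV] xn by simp
  define U where "U = (\<integral>s. norm (u s) \<partial>M)"
  have "1 \<le> (\<integral>s. norm (x s - u s) + norm (u s) \<partial>M)"
    unfolding xint[symmetric]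
    by (rule integral_mono[OF Ix Bochner_Integration.integrable_add[OF Ixu Iu]])
       (metis add.commute norm_triangle_sub)
  also have "\<dots> = (\<integral>s. norm (x s - u s) \<partial>M) + U"
    using Bochner_Integration.integral_add[OF Ixu Iu] U_def by simp
  finally have U1: "1 - \<delta> \<le> U" using u(3) by simp
  have Upos: "U > 0" using U1 d by simp
  obtain v0 where v0: "v0 \<noteq> 0" "{s\<in>space M. u s = v0} \<in> sets M"
    "0 < measure M {s\<in>space M. u s = v0}" "emeasure M {s\<in>space M. u s = v0} < \<infinity>"
    using v0_exists[OF u(1,2)] Upos U_def by blast
  define p0 where "p0 = v0 /\<^sub>R norm v0"
  have p0: "norm p0 = 1" using v0(1) by (simp add: p0_def)
  define Y where "Y v = (if v \<noteq> 0 then (SOME phi. goodX phi e' \<and> phi (v /\<^sub>R norm v) > 1 - e')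
     else (SOME phi. goodX phi e' \<and> phi p0 > 1 - e'))" for v :: 'b
  have Yprop: "goodX (Y v) e' \<and> (v \<noteq> 0 \<longrightarrow> Y v (v /\<^sub>R norm v) > 1 - e')" for v
  proof (cases "v = 0")
    case True
    have ex: "\<exists>phi. goodX phi e' \<and> phi p0 > 1 - e'" by (rule GL_extract[OF GLX p0 e'(1)])
    have "goodX (Y v) e' \<and> Y v p0 > 1 - e'" unfolding Y_def using someI_ex[OF ex] True by simp
    then show ?thesis using True by simp
  next
    case False
    have "norm (v /\<^sub>R norm v) = 1" using False by simp
    then have ex: "\<exists>phi. goodX phi e' \<and> phi (v /\<^sub>R norm v) > 1 - e'" by (rule GL_extract[OF GLX _ e'(1)])
    show ?thesis unfolding Y_def using someI_ex[OF ex] False by simp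
  qed
  have Yg: "\<And>v. goodX (Y v) e'" using Yprop by blast
  have Yd: "\<And>v. Y v \<in> dual_sphere UNIV (+) (*\<^sub>R) norm" using Yg unfolding goodX_def by auto
  have Yadd: "\<And>v a b. Y v (a + b) = Y v a + Y v b" and Yscl: "\<And>v c p. Y v (c *\<^sub>R p) = c * Y v p"
    using Yd unfolding dual_sphere_def by auto
  have Ylow: "Y v v \<ge> (1 - e') * norm v" for v
  proof (cases "v = 0")
    case True then show ?thesis using Yscl[of v 0 0] by simp
  next
    case False
    have "Y v v = norm v * Y v (v /\<^sub>R norm v)"
      using Yscl[of v "norm v" "v /\<^sub>R norm v"] False by simp
    also have "\<dots> \<ge> norm v * (1 - e')"
      using Yprop[of v] False by (intro mult_left_mono) auto
    finally show ?thesis by (simp add: mult.commute)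
  qed
  define \<phi> where "\<phi> = (\<lambda>f::'s \<Rightarrow> 'b. \<integral>s. Y (u s) (f s) \<partial>M)"
  have \<phi>d: "\<phi> \<in> dual_sphere (L1 M) fadd fscale (L1norm M)"
    unfolding \<phi>_def by (rule phi_dual[OF cm u(1) Yd refl v0(2-4)])
  have Nnn: "0 \<le> L1norm M f" for f :: "'s \<Rightarrow> 'b" by (simp add: L1norm_def)
  show "\<exists>phi\<in>dual_sphere (L1 M) fadd fscale (L1norm M).
          x \<in> slice (L1 M) (L1norm M) phi \<epsilon> \<and>
          (\<forall>z\<in>L1 M. L1norm M z = 1 \<longrightarrow>
              Defs.setdist fadd fscale (L1norm M) z (slice (L1 M) (L1norm M) phi \<epsilon>) +
              Defs.setdist fadd fscale (L1norm M) z (fscale (- 1) ` slice (L1 M) (L1norm M) phi \<epsilon>)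
              < 2 + \<epsilon>)"
  proof (rule bexI[OF _ \<phi>d], intro conjI ballI impI)
    have pwx: "Y (u s) (x s) \<ge> (1 - e') * norm (u s) - norm (x s - u s)" for s
    proof -
      have "Y (u s) (x s) = Y (u s) (u s) + Y (u s) (x s - u s)"
        using Yadd[of "u s" "u s" "x s - u s"] by simp
      moreover have "\<bar>Y (u s) (x s - u s)\<bar> \<le> norm (x s - u s)" using dual_X(2)[OF Yd] by blast
      ultimately show ?thesis using Ylow[of "u s"] by linarith
    qed
    have "(\<integral>s. (1 - e') * norm (u s) - norm (x s - u s) \<partial>M) \<le> \<phi> x"
      unfolding \<phi>_def
      by (rule integral_mono[OF _ phi_int(1)[OF cm u(1) Yd xV]])
         (use Iu Ixu pwx in auto)
    moreover have "(\<integral>s. (1 - e') * norm (u s) - norm (x s - u s) \<partial>M) = (1 - e') * U - (\<integral>s. norm (x s - u s) \<partial>M)"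
      using Iu Ixu by (simp add: U_def)
    moreover have "(1 - e') * (1 - \<delta>) \<le> (1 - e') * U" using U1 e' by (intro mult_left_mono) auto
    moreover have "(1 - e') * (1 - \<delta>) - \<delta> > 1 - \<epsilon>"
    proof -
      have "0 < e * (e * 20)" using e(1) by simp
      then show ?thesis using e by (simp add: e'_def \<delta>_def field_simps del: mult_pos_pos zero_less_mult_iff)
    qed
    ultimately have "\<phi> x > 1 - \<epsilon>" using u(3) by linarith
    then show "x \<in> slice (L1 M) (L1norm M) \<phi> \<epsilon>" using xV xn by (simp add: slice_def)
  next
    fix z :: "'s \<Rightarrow> 'b" assume zV: "z \<in> L1 M" and zn: "L1norm M z = 1"
    obtain g h where gh: "g \<in> L1 M" "h \<in> L1 M" "L1norm M g \<le> 1" "L1norm M h \<le> 1"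
      "(\<integral>s. Y (u s) (g s) \<partial>M) \<ge> 1 - e'" "(\<integral>s. Y (u s) (h s) \<partial>M) \<ge> 1 - e'"
      "(\<integral>s. norm (z s - g s) \<partial>M) + (\<integral>s. norm (z s + h s) \<partial>M) < 4 * \<delta> + (2 + e') * (1 + \<delta>)"
      using z_part[where Y=Y, OF cm u(1) Yg e'(1) d zV zn] by blast
    define S where "S = slice (L1 M) (L1norm M) \<phi> \<epsilon>"
    have gS: "g \<in> S" using gh(1,3,5) e'(2) by (simp add: S_def slice_def \<phi>_def)
    have hS: "h \<in> S" using gh(2,4,6) e'(2) by (simp add: S_def slice_def \<phi>_def)
    have s1: "Defs.setdist fadd fscale (L1norm M) z S \<le> (\<integral>s. norm (z s - g s) \<partial>M)"
    proof -
      have "Defs.setdist fadd fscale (L1norm M) z S \<le> L1norm M (fadd z (fscale (-1) g))"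
        unfolding setdist_def by (rule cINF_lower[OF bdd_belowI2[where m=0] gS]) (rule Nnn)
      also have "\<dots> = (\<integral>s. norm (z s - g s) \<partial>M)"
        using L1norm_comb[OF cm zV gh(1), of "-1"] by simp
      finally show ?thesis .
    qed
    have s2: "Defs.setdist fadd fscale (L1norm M) z (fscale (-1) ` S) \<le> (\<integral>s. norm (z s + h s) \<partial>M)"
    proof -
      have hS': "fscale (-1) h \<in> fscale (-1) ` S" using hS by blast
      have "Defs.setdist fadd fscale (L1norm M) z (fscale (-1) ` S) \<le> L1norm M (fadd z (fscale (-1) (fscale (-1) h)))"
        unfolding setdist_def by (rule cINF_lower[OF bdd_belowI2[where m=0] hS']) (rule Nnn)
      also have "fscale (-1) (fscale (-1) h) = fscale 1 h" by (simp add: fscale_def)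
      also have "L1norm M (fadd z (fscale 1 h)) = (\<integral>s. norm (z s + h s) \<partial>M)"
        using L1norm_comb[OF cm zV gh(2), of 1] by simp
      finally show ?thesis .
    qed
    have "4 * \<delta> + (2 + e') * (1 + \<delta>) \<le> 2 + \<epsilon>"
    proof -
      have ee: "e * e \<le> e" using e by (simp add: mult_le_cancel_left1)
      show ?thesis by (simp add: e'_def \<delta>_def field_simps) (use ee e in linarith)
    qed
    then show "Defs.setdist fadd fscale (L1norm M) z (slice (L1 M) (L1norm M) \<phi> \<epsilon>) +
              Defs.setdist fadd fscale (L1norm M) z (fscale (- 1) ` slice (L1 M) (L1norm M) \<phi> \<epsilon>)
              < 2 + \<epsilon>"
      using s1 s2 gh(7) unfolding S_def by linarith
  qed
qed

end
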